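(* Let $m$ be a positive integer, $K\subseteq\mathbb{R}$, $\gamma:K\to\mathbb{H}$, $X\subseteq K$ with $\#X=m+1$, $a,b\in X$, and $p\in\mathbb{H}$. Then $$A[X,p*\gamma;a,b]=A[X,\gamma;a,b]\quad\text{and}\quad V[X,p*\gamma;a,b]=V[X,\gamma;a,b],$$ where $p*\gamma$ is the map $t\mapsto p*\gamma(t)$.
   Context: $\mathbb{H}$ is $\mathbb{R}^3$ with group law $(x,y,z)*(x',y',z')=(x+x',\,y+y',\,z+z'+2(yx'-xy'))$. For a set $X$ of $m+1$ distinct points and $\phi:X\to\mathbb{R}$, $P(X;\phi)$ denotes the unique polynomial of degree $\le m$ agreeing with $\phi$ on $X$ (Newton interpolation polynomial). For $\gamma=(f,g,h)$, $P_f=P(X;f)$, $P_g=P(X;g)$, and $a,b\in X$: $A[X,\gamma;a,b]=h(b)-h(a)-2\int_a^b(P_f'P_g-P_g'P_f)$, $V[X,\gamma;a,b]=\operatorname{diam}(X)^{2m}+\operatorname{diam}(X)^m\int_a^b(|P_f'|+|P_g'|)$. *)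

theory Defs
  imports "HOL-Analysis.Analysis" "HOL-Computational_Algebra.Polynomial"
begin

type_synonym heis = "real \<times> real \<times> real"

definition hmult :: "heis \<Rightarrow> heis \<Rightarrow> heis" where
  "hmult p q = (case p of (x, y, z) \<Rightarrow> case q of (x', y', z') \<Rightarrow>
      (x + x', y + y', z + z' + 2 * (y * x' - x * y')))"

definition interp :: "real set \<Rightarrow> (real \<Rightarrow> real) \<Rightarrow> real poly" where
  "interp X phi = (THE P. degree P \<le> card X - 1 \<and> (\<forall>x\<in>X. poly P x = phi x))"

definition oint :: "real \<Rightarrow> real \<Rightarrow> (real \<Rightarrow> real) \<Rightarrow> real" where
  "oint a b f = (if a \<le> b then integral {a..b} f else - integral {b..a} f)"

definition fstc :: "(real \<Rightarrow> heis) \<Rightarrow> real \<Rightarrow> real" where "fstc \<gamma> t = fst (\<gamma> t)"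
definition sndc :: "(real \<Rightarrow> heis) \<Rightarrow> real \<Rightarrow> real" where "sndc \<gamma> t = fst (snd (\<gamma> t))"
definition thdc :: "(real \<Rightarrow> heis) \<Rightarrow> real \<Rightarrow> real" where "thdc \<gamma> t = snd (snd (\<gamma> t))"

definition Aq :: "real set \<Rightarrow> (real \<Rightarrow> heis) \<Rightarrow> real \<Rightarrow> real \<Rightarrow> real" where
  "Aq X \<gamma> a b = (let Pf = interp X (fstc \<gamma>); Pg = interp X (sndc \<gamma>) in
     thdc \<gamma> b - thdc \<gamma> a
     - 2 * oint a b (\<lambda>t. poly (pderiv Pf) t * poly Pg t - poly (pderiv Pg) t * poly Pf t))"

definition Vq :: "nat \<Rightarrow> real set \<Rightarrow> (real \<Rightarrow> heis) \<Rightarrow> real \<Rightarrow> real \<Rightarrow> real" where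
  "Vq m X \<gamma> a b = (let Pf = interp X (fstc \<gamma>); Pg = interp X (sndc \<gamma>) in
     diameter X ^ (2 * m) + diameter X ^ m * oint a b (\<lambda>t. \<bar>poly (pderiv Pf) t\<bar> + \<bar>poly (pderiv Pg) t\<bar>))"

end

theory Submission
  imports Defs
begin

lemma interp_exists:
  fixes phi :: "real \<Rightarrow> real"
  assumes "finite X"
  shows "\<exists>P. degree P \<le> card X - 1 \<and> (\<forall>x\<in>X. poly P x = phi x)"
  using assms
proof (induction X rule: finite_induct)
  case empty
  then show ?case by (intro exI[of _ 0]) auto
next
  case (insert x Y)
  then obtain P where P: "degree P \<le> card Y - 1" "\<forall>y\<in>Y. poly P y = phi y" by blast
  define R where "R = (\<Prod>y\<in>Y. [:-y, 1:])"
  have Rd: "degree R \<le> card Y"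
    unfolding R_def using insert(1) by (rule order.trans[OF degree_prod_sum_le]) (simp add: o_def)
  have R0: "\<forall>y\<in>Y. poly R y = 0" unfolding R_def poly_prod using insert(1)
    by (auto intro: prod_zero)
  have Rx: "poly R x \<noteq> 0" unfolding R_def poly_prod using insert(1,2) by auto
  define c where "c = (phi x - poly P x) / poly R x"
  define Q where "Q = P + smult c R"
  have "degree Q \<le> max (degree P) (degree (smult c R))" unfolding Q_def by (rule degree_add_le_max)
  also have "\<dots> \<le> card Y" using P(1) Rd degree_smult_le[of c R] by auto
  finally have "degree Q \<le> card (insert x Y) - 1" using insert(1,2) by simp
  moreover have "\<forall>y\<in>insert x Y. poly Q y = phi y"
    using P(2) R0 Rx unfolding Q_def c_def by auto
  ultimately show ?case by blast
qed

lemma interp_prop: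
  assumes "finite X" "X \<noteq> {}"
  shows "degree (interp X phi) \<le> card X - 1 \<and> (\<forall>x\<in>X. poly (interp X phi) x = phi x)"
proof -
  obtain P where P: "degree P \<le> card X - 1 \<and> (\<forall>x\<in>X. poly P x = phi x)"
    using interp_exists[OF assms(1)] by blast
  have cX: "card X > 0" using assms by (simp add: card_gt_0_iff)
  show ?thesis unfolding interp_def
  proof (rule theI[of _ P])
    show "degree P \<le> card X - 1 \<and> (\<forall>x\<in>X. poly P x = phi x)" by (rule P)
  next
    fix Q assume Q: "degree Q \<le> card X - 1 \<and> (\<forall>x\<in>X. poly Q x = phi x)"
    show "Q = P"
      by (rule poly_eqI_degree[of X]) (use P Q cX in auto)
  qed
qed

lemma interp_shift:
  assumes "finite X" "X \<noteq> {}"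
  shows "interp X (\<lambda>t. c + phi t) = interp X phi + [:c:]"
proof -
  have cX: "card X > 0" using assms by (simp add: card_gt_0_iff)
  have P: "degree (interp X phi) \<le> card X - 1" "\<forall>x\<in>X. poly (interp X phi) x = phi x"
    using interp_prop[OF assms] by auto
  have Q: "degree (interp X (\<lambda>t. c + phi t)) \<le> card X - 1"
      "\<forall>x\<in>X. poly (interp X (\<lambda>t. c + phi t)) x = c + phi x"
    using interp_prop[OF assms] by auto
  have d: "degree (interp X phi + [:c:]) \<le> card X - 1"
    using P(1) degree_add_le[of "interp X phi" "card X - 1" "[:c:]"] by auto
  show ?thesis
    by (rule poly_eqI_degree[of X]) (use P Q d cX in auto)
qed

lemma oint_add_deriv:
  fixes F :: "real \<Rightarrow> real"
  assumes "continuous_on UNIV F"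
  shows "oint a b (\<lambda>t. F t + poly (pderiv Q) t) = oint a b F + (poly Q b - poly Q a)"
proof -
  have ftc: "(\<lambda>t. poly (pderiv Q) t) integrable_on {u..v} \<and>
      integral {u..v} (\<lambda>t. poly (pderiv Q) t) = poly Q v - poly Q u" if "u \<le> v" for u v
  proof -
    have "((\<lambda>t. poly (pderiv Q) t) has_integral (poly Q v - poly Q u)) {u..v}"
      using that
      by (intro fundamental_theorem_of_calculus)
         (auto simp: has_real_derivative_iff_has_vector_derivative[symmetric]
               intro: has_field_derivative_at_within poly_DERIV)
    then show ?thesis by (auto simp: has_integral_iff)
  qed
  have Fi: "F integrable_on {u..v}" for u v
    by (rule integrable_continuous_interval) (use assms continuous_on_subset in blast)
  show ?thesis
  proof (cases "a \<le> b")
    case True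
    then show ?thesis unfolding oint_def using ftc[OF True] Fi[of a b]
      by (simp add: integral_add)
  next
    case False
    then have "b \<le> a" by simp
    then show ?thesis unfolding oint_def using ftc[OF \<open>b \<le> a\<close>] Fi[of b a] False
      by (simp add: integral_add)
  qed
qed

theorem lemma4p3:
  fixes m :: nat and K X :: "real set" and \<gamma> :: "real \<Rightarrow> heis" and a b :: real and p :: heis
  assumes "m > 0" and "X \<subseteq> K" and "finite X" and "card X = m + 1" and "a \<in> X" and "b \<in> X"
  shows "Aq X (\<lambda>t. hmult p (\<gamma> t)) a b = Aq X \<gamma> a b
       \<and> Vq m X (\<lambda>t. hmult p (\<gamma> t)) a b = Vq m X \<gamma> a b"
proof -
  obtain x0 y0 z0 where p: "p = (x0, y0, z0)" by (cases p) auto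
  have ne: "X \<noteq> {}" using assms(5) by auto
  let ?g = "\<lambda>t. hmult p (\<gamma> t)"
  have f1: "fstc ?g = (\<lambda>t. x0 + fstc \<gamma> t)"
    by (auto simp: fstc_def hmult_def p split: prod.splits)
  have g1: "sndc ?g = (\<lambda>t. y0 + sndc \<gamma> t)"
    by (auto simp: sndc_def hmult_def p split: prod.splits)
  have h1: "thdc ?g t = z0 + thdc \<gamma> t + 2 * (y0 * fstc \<gamma> t - x0 * sndc \<gamma> t)" for t
    by (auto simp: thdc_def fstc_def sndc_def hmult_def p split: prod.splits)
  define Pf where "Pf = interp X (fstc \<gamma>)"
  define Pg where "Pg = interp X (sndc \<gamma>)"
  have if1: "interp X (fstc ?g) = Pf + [:x0:]" unfolding f1 Pf_def by (rule interp_shift[OF assms(3) ne])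
  have ig1: "interp X (sndc ?g) = Pg + [:y0:]" unfolding g1 Pg_def by (rule interp_shift[OF assms(3) ne])
  have Pfv: "poly Pf a = fstc \<gamma> a" "poly Pf b = fstc \<gamma> b"
    using interp_prop[OF assms(3) ne] assms(5,6) unfolding Pf_def by auto
  have Pgv: "poly Pg a = sndc \<gamma> a" "poly Pg b = sndc \<gamma> b"
    using interp_prop[OF assms(3) ne] assms(5,6) unfolding Pg_def by auto
  define Q where "Q = smult y0 Pf - smult x0 Pg"
  have eqi: "(\<lambda>t. poly (pderiv (Pf + [:x0:])) t * poly (Pg + [:y0:]) t
        - poly (pderiv (Pg + [:y0:])) t * poly (Pf + [:x0:]) t)
      = (\<lambda>t. (poly (pderiv Pf) t * poly Pg t - poly (pderiv Pg) t * poly Pf t) + poly (pderiv Q) t)"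
    by (auto simp: pderiv_add pderiv_pCons Q_def pderiv_smult pderiv_diff algebra_simps)
  have cont: "continuous_on UNIV (\<lambda>t. poly (pderiv Pf) t * poly Pg t - poly (pderiv Pg) t * poly Pf t)"
    by (intro continuous_intros)
  have A: "Aq X ?g a b = Aq X \<gamma> a b"
    unfolding Aq_def Let_def if1 ig1 eqi oint_add_deriv[OF cont]
    by (simp add: h1 Q_def Pfv Pgv Pf_def[symmetric] Pg_def[symmetric] algebra_simps)
  have V: "Vq m X ?g a b = Vq m X \<gamma> a b"
    unfolding Vq_def Let_def if1 ig1
    by (simp add: pderiv_add pderiv_pCons Pf_def Pg_def)
  show ?thesis using A V by simp
qed

end
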